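(* Let $\mathfrak l$ be a real finite-dimensional nilpotent admissible Lie algebra with $\dim\mathfrak l'=2$ and $\mathfrak l'\subset\mathfrak z(\mathfrak l)$, and let $n=\dim\mathfrak l-2$. Then there is a basis $X_1,\dots,X_n,Y,Z$ of $\mathfrak l$ such that $[X_1,X_2]=Y$, $[X_1,X_3]=Z$, $[X_2,X_3]=0$, and (if $n\ge4$) $[X_1,X_4]=0$, $[X_2,X_4]=\lambda Z$ for some $\lambda\in\{0,1\}$, and $[X_1,X_j]=[X_2,X_j]=0$ for all $j\ge5$. Moreover, for any such basis and any $j_0$ with $[X_1,X_j]=[X_2,X_j]=[X_3,X_j]=0$ for all $j\ge j_0$, we have $[X_r,X_s]=0$ for all $r,s\ge j_0$.
   Context: For a Lie algebra $\mathfrak l$: $\mathfrak l^1=\mathfrak l$, $\mathfrak l^{k+1}=[\mathfrak l,\mathfrak l^k]$, $\mathfrak l'=\mathfrak l^2$, $\mathfrak z(\mathfrak l)$ the centre. An orthogonal $\mathfrak l$-module $(\rho,\mathfrak a)$ is a finite-dimensional real vector space with a nondegenerate symmetric bilinear form $\langle\cdot,\cdot\rangle_{\mathfrak a}$ and a representation by skew-adjoint maps. $C^p(\mathfrak l,\mathfrak a)$: alternating $p$-linear maps with Chevalley–Eilenberg differential $d$; $C^p(\mathfrak l)=C^p(\mathfrak l,\mathbb R)$; $\langle\alpha\wedge\beta\rangle$ is the wedge product followed by contraction with $\langle\cdot,\cdot\rangle_{\mathfrak a}$. $\mathcal Z^2_Q(\mathfrak l,\mathfrak a)=\{(\alpha,\gamma)\in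 C^2(\mathfrak l,\mathfrak a)\oplus C^3(\mathfrak l): d\alpha=0,d\gamma=\frac12\langle\alpha\wedge\alpha\rangle\}$; the group $C^1(\mathfrak l,\mathfrak a)\oplus C^2(\mathfrak l)$ with $(\tau_1,\sigma_1)*(\tau_2,\sigma_2)=(\tau_1+\tau_2,\sigma_1+\sigma_2+\frac12\langle\tau_1\wedge\tau_2\rangle)$ acts by $(\alpha,\gamma)(\tau,\sigma)=(\alpha+d\tau,\gamma+d\sigma+\langle(\alpha+\frac12d\tau)\wedge\tau\rangle)$; $\mathcal H^2_Q(\mathfrak l,\mathfrak a)$ is the orbit set. Admissibility: for semisimple $(\rho,\mathfrak a)$, with $\mathfrak l^{m+2}=0$, $\mathfrak l_{(0)}=\mathfrak z(\mathfrak l)\cap\ker\rho$, $\mathfrak l_{(k)}=\mathfrak z(\mathfrak l)\cap\mathfrak l^{k+1}$ ($k\ge1$), and a representative with $\alpha(\mathfrak l,\mathfrak l)\subset\mathfrak a^{\mathfrak l}$, a class is admissible iff for all $0\le k\le m$: $(A_k)$ whenever $L_0\in\mathfrak l_{(k)}$ and there are $A_0\in\mathfrak a$, $Z_0\in(\mathfrak l^{k+1})^*$ with $\alpha(L,L_0)=0$ and $\gamma(L,L_0,\cdot)=-\langle A_0,\alpha(L,\cdot)\rangle_{\mathfrak a}+\langle Z_0,[L,\cdot]\rangle$ on $\mathfrak l^{k+1}$ for all $L$, then $L_0=0$; $(B_k)$ $\alpha$ applied to the kernel of the bracket map $\mathfrak l\otimes\mathfrak l^{k+1}\to\mathfrak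 l$ is a nondegenerate subspace of $\mathfrak a$. $\mathfrak l$ is admissible if some semisimple orthogonal module admits an admissible class. *)

theory Defs
  imports "HOL-Analysis.Analysis"
begin

text \<open>A Lie algebra is modelled on a Euclidean space type (a finite-dimensional real
vector space; the inner product plays no role) together with a bracket.\<close>

definition lie_algebra :: "('a::euclidean_space \<Rightarrow> 'a \<Rightarrow> 'a) \<Rightarrow> bool" where
  "lie_algebra br \<longleftrightarrow>
     (\<forall>x. linear (br x)) \<and> (\<forall>y. linear (\<lambda>x. br x y)) \<and>
     (\<forall>x. br x x = 0) \<and>
     (\<forall>x y z. br x (br y z) + br y (br z x) + br z (br x y) = 0)"

text \<open>Lower central series, shifted: lcs0 br k is the term with index k+1,
so lcs0 br 0 is the whole algebra and lcs0 br 1 is the derived algebra.\<close>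

primrec lcs0 :: "('a::euclidean_space \<Rightarrow> 'a \<Rightarrow> 'a) \<Rightarrow> nat \<Rightarrow> 'a set" where
  "lcs0 br 0 = UNIV"
| "lcs0 br (Suc k) = span {br x y |x y. y \<in> lcs0 br k}"

definition nilpotent_lie :: "('a::euclidean_space \<Rightarrow> 'a \<Rightarrow> 'a) \<Rightarrow> bool" where
  "nilpotent_lie br \<longleftrightarrow> (\<exists>m. lcs0 br m = {0})"

definition centre :: "('a::euclidean_space \<Rightarrow> 'a \<Rightarrow> 'a) \<Rightarrow> 'a set" where
  "centre br = {z. \<forall>x. br x z = 0}"

text \<open>The module is the subspace V of a Euclidean space type (allowing dimension 0);
rho is the action, B the nondegenerate symmetric bilinear form.\<close>

definition rho_invariant :: "('a \<Rightarrow> 'v \<Rightarrow> 'v) \<Rightarrow> 'v set \<Rightarrow> bool" where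
  "rho_invariant \<rho> W \<longleftrightarrow> (\<forall>x. \<forall>w\<in>W. \<rho> x w \<in> W)"

definition semisimple_orthogonal_module ::
  "('a::euclidean_space \<Rightarrow> 'a \<Rightarrow> 'a) \<Rightarrow> 'v::euclidean_space set \<Rightarrow> ('a \<Rightarrow> 'v \<Rightarrow> 'v)
   \<Rightarrow> ('v \<Rightarrow> 'v \<Rightarrow> real) \<Rightarrow> bool" where
  "semisimple_orthogonal_module br V \<rho> B \<longleftrightarrow>
     subspace V \<and> rho_invariant \<rho> V \<and>
     (\<forall>x. linear (\<rho> x)) \<and> (\<forall>v. linear (\<lambda>x. \<rho> x v)) \<and>
     (\<forall>x y. \<forall>v\<in>V. \<rho> (br x y) v = \<rho> x (\<rho> y v) - \<rho> y (\<rho> x v)) \<and>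
     (\<forall>v. linear (B v)) \<and> (\<forall>w. linear (\<lambda>v. B v w)) \<and>
     (\<forall>v\<in>V. \<forall>w\<in>V. B v w = B w v) \<and>
     (\<forall>v\<in>V. (\<forall>w\<in>V. B v w = 0) \<longrightarrow> v = 0) \<and>
     (\<forall>x. \<forall>v\<in>V. \<forall>w\<in>V. B (\<rho> x v) w = - B v (\<rho> x w)) \<and>
     \<comment> \<open>semisimple = completely reducible\<close>
     (\<forall>W. subspace W \<and> W \<subseteq> V \<and> rho_invariant \<rho> W \<longrightarrow>
        (\<exists>U. subspace U \<and> U \<subseteq> V \<and> rho_invariant \<rho> U \<and> W \<inter> U = {0} \<and>
             (\<forall>v\<in>V. \<exists>w\<in>W. \<exists>u\<in>U. v = w + u)))"

definition invariants :: "('a \<Rightarrow> 'v \<Rightarrow> 'v) \<Rightarrow> 'v::real_vector set \<Rightarrow> 'v set" where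
  "invariants \<rho> V = {v\<in>V. \<forall>x. \<rho> x v = 0}"

definition cochain2 :: "'v::euclidean_space set \<Rightarrow> ('a::euclidean_space \<Rightarrow> 'a \<Rightarrow> 'v) \<Rightarrow> bool" where
  "cochain2 V \<alpha> \<longleftrightarrow> (\<forall>x. linear (\<alpha> x)) \<and> (\<forall>y. linear (\<lambda>x. \<alpha> x y)) \<and>
     (\<forall>x. \<alpha> x x = 0) \<and> (\<forall>x y. \<alpha> x y \<in> V)"

definition cochain3 :: "('a::euclidean_space \<Rightarrow> 'a \<Rightarrow> 'a \<Rightarrow> real) \<Rightarrow> bool" where
  "cochain3 \<gamma> \<longleftrightarrow> (\<forall>x y. linear (\<gamma> x y)) \<and> (\<forall>x z. linear (\<lambda>y. \<gamma> x y z)) \<and>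
     (\<forall>y z. linear (\<lambda>x. \<gamma> x y z)) \<and>
     (\<forall>x z. \<gamma> x x z = 0) \<and> (\<forall>x y. \<gamma> x y y = 0) \<and> (\<forall>x y. \<gamma> x y x = 0)"

text \<open>Chevalley--Eilenberg differential of a 2-cochain with values in the module.\<close>
definition d2 :: "('a \<Rightarrow> 'a \<Rightarrow> 'a) \<Rightarrow> ('a \<Rightarrow> 'v \<Rightarrow> 'v) \<Rightarrow> ('a \<Rightarrow> 'a \<Rightarrow> 'v::real_vector)
                 \<Rightarrow> 'a \<Rightarrow> 'a \<Rightarrow> 'a \<Rightarrow> 'v" where
  "d2 br \<rho> \<alpha> x y z =
     \<rho> x (\<alpha> y z) - \<rho> y (\<alpha> x z) + \<rho> z (\<alpha> x y)
     - \<alpha> (br x y) z + \<alpha> (br x z) y - \<alpha> (br y z) x"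

text \<open>Chevalley--Eilenberg differential of a real 3-cochain (trivial coefficients).\<close>
definition d3 :: "('a \<Rightarrow> 'a \<Rightarrow> 'a) \<Rightarrow> ('a \<Rightarrow> 'a \<Rightarrow> 'a \<Rightarrow> real) \<Rightarrow> 'a \<Rightarrow> 'a \<Rightarrow> 'a \<Rightarrow> 'a \<Rightarrow> real" where
  "d3 br \<gamma> x1 x2 x3 x4 =
     - \<gamma> (br x1 x2) x3 x4 + \<gamma> (br x1 x3) x2 x4 - \<gamma> (br x1 x4) x2 x3
     - \<gamma> (br x2 x3) x1 x4 + \<gamma> (br x2 x4) x1 x3 - \<gamma> (br x3 x4) x1 x2"

text \<open>Half of the contracted wedge square of a 2-cochain (shuffle convention).\<close>
definition half_wedge_sq :: "('v \<Rightarrow> 'v \<Rightarrow> real) \<Rightarrow> ('a \<Rightarrow> 'a \<Rightarrow> 'v) \<Rightarrow> 'a \<Rightarrow> 'a \<Rightarrow> 'a \<Rightarrow> 'a \<Rightarrow> real" where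
  "half_wedge_sq B \<alpha> x1 x2 x3 x4 =
     B (\<alpha> x1 x2) (\<alpha> x3 x4) - B (\<alpha> x1 x3) (\<alpha> x2 x4) + B (\<alpha> x1 x4) (\<alpha> x2 x3)"

definition quad_cocycle ::
  "('a::euclidean_space \<Rightarrow> 'a \<Rightarrow> 'a) \<Rightarrow> 'v::euclidean_space set \<Rightarrow> ('a \<Rightarrow> 'v \<Rightarrow> 'v)
   \<Rightarrow> ('v \<Rightarrow> 'v \<Rightarrow> real) \<Rightarrow> ('a \<Rightarrow> 'a \<Rightarrow> 'v) \<Rightarrow> ('a \<Rightarrow> 'a \<Rightarrow> 'a \<Rightarrow> real) \<Rightarrow> bool" where
  "quad_cocycle br V \<rho> B \<alpha> \<gamma> \<longleftrightarrow>
     cochain2 V \<alpha> \<and> cochain3 \<gamma> \<and>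
     (\<forall>x y z. d2 br \<rho> \<alpha> x y z = 0) \<and>
     (\<forall>x1 x2 x3 x4. d3 br \<gamma> x1 x2 x3 x4 = half_wedge_sq B \<alpha> x1 x2 x3 x4)"

definition lsub :: "('a::euclidean_space \<Rightarrow> 'a \<Rightarrow> 'a) \<Rightarrow> 'v::real_vector set \<Rightarrow> ('a \<Rightarrow> 'v \<Rightarrow> 'v)
                   \<Rightarrow> nat \<Rightarrow> 'a set" where
  "lsub br V \<rho> k =
     (if k = 0 then {z \<in> centre br. \<forall>v\<in>V. \<rho> z v = 0} else centre br \<inter> lcs0 br k)"

definition cond_A ::
  "('a::euclidean_space \<Rightarrow> 'a \<Rightarrow> 'a) \<Rightarrow> 'v::euclidean_space set \<Rightarrow> ('a \<Rightarrow> 'v \<Rightarrow> 'v)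
   \<Rightarrow> ('v \<Rightarrow> 'v \<Rightarrow> real) \<Rightarrow> ('a \<Rightarrow> 'a \<Rightarrow> 'v) \<Rightarrow> ('a \<Rightarrow> 'a \<Rightarrow> 'a \<Rightarrow> real) \<Rightarrow> nat \<Rightarrow> bool" where
  "cond_A br V \<rho> B \<alpha> \<gamma> k \<longleftrightarrow>
     (\<forall>L0. L0 \<in> lsub br V \<rho> k \<and>
        (\<exists>A0\<in>V. \<exists>Z0::'a \<Rightarrow> real. linear Z0 \<and>
           (\<forall>L. \<alpha> L L0 = 0) \<and>
           (\<forall>L. \<forall>X\<in>lcs0 br k. \<gamma> L L0 X = - B A0 (\<alpha> L X) + Z0 (br L X)))
      \<longrightarrow> L0 = 0)"

text \<open>Image under alpha of the kernel of the bracket map from l tensor l^(k+1) to l;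
elements of the tensor product are written as finite sums of pure tensors.\<close>
definition alpha_kernel_image ::
  "('a::euclidean_space \<Rightarrow> 'a \<Rightarrow> 'a) \<Rightarrow> ('a \<Rightarrow> 'a \<Rightarrow> 'v::real_vector) \<Rightarrow> nat \<Rightarrow> 'v set" where
  "alpha_kernel_image br \<alpha> k =
     {sum_list (map (\<lambda>(x, y). \<alpha> x y) ps) |ps.
        (\<forall>(x, y)\<in>set ps. y \<in> lcs0 br k) \<and> sum_list (map (\<lambda>(x, y). br x y) ps) = 0}"

definition nondegenerate_subspace :: "('v \<Rightarrow> 'v \<Rightarrow> real) \<Rightarrow> 'v::real_vector set \<Rightarrow> bool" where
  "nondegenerate_subspace B W \<longleftrightarrow> (\<forall>w\<in>W. (\<forall>u\<in>W. B w u = 0) \<longrightarrow> w = 0)"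

definition cond_B ::
  "('a::euclidean_space \<Rightarrow> 'a \<Rightarrow> 'a) \<Rightarrow> ('v::real_vector \<Rightarrow> 'v \<Rightarrow> real) \<Rightarrow> ('a \<Rightarrow> 'a \<Rightarrow> 'v) \<Rightarrow> nat \<Rightarrow> bool" where
  "cond_B br B \<alpha> k \<longleftrightarrow> nondegenerate_subspace B (alpha_kernel_image br \<alpha> k)"

text \<open>An admissible class in quadratic cohomology of a semisimple orthogonal module,
given by a representative (alpha, gamma) with alpha(l,l) in the invariants.
Conditions are required for all k; for k > m (with l^(m+2) = 0) they hold trivially.\<close>
definition admissible_data ::
  "('a::euclidean_space \<Rightarrow> 'a \<Rightarrow> 'a) \<Rightarrow> 'v::euclidean_space set \<Rightarrow> ('a \<Rightarrow> 'v \<Rightarrow> 'v)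
   \<Rightarrow> ('v \<Rightarrow> 'v \<Rightarrow> real) \<Rightarrow> ('a \<Rightarrow> 'a \<Rightarrow> 'v) \<Rightarrow> ('a \<Rightarrow> 'a \<Rightarrow> 'a \<Rightarrow> real) \<Rightarrow> bool" where
  "admissible_data br V \<rho> B \<alpha> \<gamma> \<longleftrightarrow>
     semisimple_orthogonal_module br V \<rho> B \<and>
     quad_cocycle br V \<rho> B \<alpha> \<gamma> \<and>
     (\<forall>x y. \<alpha> x y \<in> invariants \<rho> V) \<and>
     (\<forall>k. cond_A br V \<rho> B \<alpha> \<gamma> k \<and> cond_B br B \<alpha> k)"

definition is_basis_XYZ :: "nat \<Rightarrow> (nat \<Rightarrow> 'a::euclidean_space) \<Rightarrow> 'a \<Rightarrow> 'a \<Rightarrow> bool" where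
  "is_basis_XYZ n X Y Z \<longleftrightarrow>
     inj_on X {1..n} \<and> Y \<notin> X ` {1..n} \<and> Z \<notin> X ` {1..n} \<and> Y \<noteq> Z \<and>
     independent (insert Y (insert Z (X ` {1..n}))) \<and>
     span (insert Y (insert Z (X ` {1..n}))) = UNIV"

definition good_basis :: "('a::euclidean_space \<Rightarrow> 'a \<Rightarrow> 'a) \<Rightarrow> nat \<Rightarrow> (nat \<Rightarrow> 'a) \<Rightarrow> 'a \<Rightarrow> 'a \<Rightarrow> bool" where
  "good_basis br n X Y Z \<longleftrightarrow>
     is_basis_XYZ n X Y Z \<and>
     br (X 1) (X 2) = Y \<and> br (X 1) (X 3) = Z \<and> br (X 2) (X 3) = 0 \<and>
     (4 \<le> n \<longrightarrow>
        br (X 1) (X 4) = 0 \<and>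
        (\<exists>c::real. c \<in> {0, 1} \<and> br (X 2) (X 4) = c *\<^sub>R Z) \<and>
        (\<forall>j. 5 \<le> j \<and> j \<le> n \<longrightarrow> br (X 1) (X j) = 0 \<and> br (X 2) (X j) = 0))"

end

theory Submission
  imports Defs
begin


definition indep2 :: "'a::real_vector \<Rightarrow> 'a \<Rightarrow> bool" where
  "indep2 p q \<longleftrightarrow> (\<forall>s t. s *\<^sub>R p + t *\<^sub>R q = 0 \<longrightarrow> s = 0 \<and> t = 0)"

lemma span2_iff: "x \<in> span {a, b} \<longleftrightarrow> (\<exists>s t. x = s *\<^sub>R a + t *\<^sub>R b)"
proof
  assume "x \<in> span {a, b}"
  then obtain k where "x - k *\<^sub>R a \<in> range (\<lambda>k. k *\<^sub>R b)"
    unfolding span_insert[of a "{b}"] span_singleton by auto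
  then obtain t where "x - k *\<^sub>R a = t *\<^sub>R b" by auto
  then have "x = k *\<^sub>R a + t *\<^sub>R b" by (simp add: algebra_simps)
  then show "\<exists>s t. x = s *\<^sub>R a + t *\<^sub>R b" by blast
next
  assume "\<exists>s t. x = s *\<^sub>R a + t *\<^sub>R b"
  then obtain s t where "x = s *\<^sub>R a + t *\<^sub>R b" by blast
  then show "x \<in> span {a, b}"
    by (simp add: span_add span_base span_scale)
qed

locale lie = fixes br :: "'a::euclidean_space \<Rightarrow> 'a \<Rightarrow> 'a"
  assumes la: "lie_algebra br"
begin
lemma linR: "linear (br x)" using la unfolding lie_algebra_def by blast
lemma linL: "linear (\<lambda>x. br x y)" using la unfolding lie_algebra_def by blast
lemma br_addR[simp]: "br x (a + b) = br x a + br x b" using linear_add[OF linR] .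
lemma br_addL[simp]: "br (a + b) y = br a y + br b y" using linear_add[OF linL[of y]] by simp
lemma br_scaleR[simp]: "br x (c *\<^sub>R a) = c *\<^sub>R br x a" using linear_scale[OF linR] .
lemma br_scaleL[simp]: "br (c *\<^sub>R a) y = c *\<^sub>R br a y" using linear_scale[OF linL[of y]] by simp
lemma br_diffR[simp]: "br x (a - b) = br x a - br x b" using linear_diff[OF linR] .
lemma br_diffL[simp]: "br (a - b) y = br a y - br b y" using linear_diff[OF linL[of y]] by simp
lemma br_negR[simp]: "br x (- a) = - br x a" using linear_neg[OF linR] .
lemma br_negL[simp]: "br (- a) y = - br a y" using linear_neg[OF linL[of y]] by simp
lemma br_0R[simp]: "br x 0 = 0" using linear_0[OF linR] .
lemma br_0L[simp]: "br 0 y = 0" using linear_0[OF linL[of y]] by simp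
lemma br_self[simp]: "br x x = 0" using la unfolding lie_algebra_def by blast
lemma br_anti: "br y x = - br x y"
proof -
  have "br (x + y) (x + y) = br x y + br y x"
    by (simp only: br_addL br_addR br_self[of x] br_self[of y] add_0_left add_0_right add.commute)
  then have "br x y + br y x = 0" by simp
  then show ?thesis by (simp add: eq_neg_iff_add_eq_0 add.commute)
qed
lemma br_in_lcs1: "br x y \<in> lcs0 br 1"
  by (auto intro: span_base)
end




lemma indep2_props: assumes "indep2 p q" shows "p \<noteq> 0" "q \<noteq> 0" "p \<noteq> q"
proof -
  show "p \<noteq> 0" using assms unfolding indep2_def by (metis add.right_neutral one_neq_zero scaleR_zero_left scaleR_zero_right)
  show "q \<noteq> 0" using assms unfolding indep2_def by (metis add.left_neutral one_neq_zero scaleR_zero_left scaleR_zero_right)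
  show "p \<noteq> q"
  proof
    assume "p = q"
    then have "1 *\<^sub>R p + (-1) *\<^sub>R q = 0" by simp
    then show False using assms unfolding indep2_def by fastforce
  qed
qed

lemma indep2_independent: assumes "indep2 p q" shows "independent {p, q}"
proof -
  note pr = indep2_props[OF assms]
  have iq: "independent {q}" using pr(2) independent_insert[of q "{}"] by simp
  have "p \<notin> span {q}"
  proof
    assume "p \<in> span {q}"
    then obtain k where "p = k *\<^sub>R q" unfolding span_singleton by auto
    then have "1 *\<^sub>R p + (-k) *\<^sub>R q = 0" by simp
    then show False using assms unfolding indep2_def by fastforce
  qed
  then show ?thesis using iq pr(3) independent_insert[of p "{q}"] by simp
qed

lemma not_indep2: assumes "\<not> indep2 p q" "p \<noteq> 0" shows "\<exists>k. q = k *\<^sub>R p"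
proof -
  from assms(1) obtain s t where st: "s *\<^sub>R p + t *\<^sub>R q = 0" "\<not> (s = 0 \<and> t = 0)"
    unfolding indep2_def by blast
  show ?thesis
  proof (cases "t = 0")
    case True
    then show ?thesis using st assms(2) by simp
  next
    case False
    have "t *\<^sub>R q = - s *\<^sub>R p" using st(1) by (simp add: eq_neg_iff_add_eq_0 add.commute)
    then have "q = (- s / t) *\<^sub>R p" using False
      by (metis (no_types, lifting) divide_inverse_commute eq_vector_fraction_iff scaleR_scaleR)
    then show ?thesis by blast
  qed
qed

lemma ind_ins: assumes "independent S" "a \<notin> span S"
  shows "independent (insert a S)" "a \<notin> S"
  using assms independent_insert[of a S] span_base[of a S] by auto

lemma card_ins2:
  assumes "finite A" "card A \<le> n" "card (insert Y (insert Z A)) = n + 2"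
  shows "Y \<notin> A" "Z \<notin> A" "Y \<noteq> Z" "card A = n"
proof -
  have f: "finite (insert Z A)" using assms(1) by simp
  have c1: "card (insert Z A) \<le> card A + 1" using assms(1) by (simp add: card_insert_if)
  have c2: "card (insert Y (insert Z A)) \<le> card (insert Z A) + 1" using f by (simp add: card_insert_if)
  have "card (insert Y (insert Z A)) = Suc (card (insert Z A))"
  proof (rule ccontr)
    assume "card (insert Y (insert Z A)) \<noteq> Suc (card (insert Z A))"
    then have "card (insert Y (insert Z A)) = card (insert Z A)" using f by (simp add: card_insert_if split: if_splits)
    then show False using assms(2,3) c1 by simp
  qed
  then have Yn: "Y \<notin> insert Z A" using f by (simp add: card_insert_if split: if_splits)
  then show "Y \<notin> A" "Y \<noteq> Z" by auto
  have "card (insert Z A) = Suc (card A)"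
  proof (rule ccontr)
    assume "card (insert Z A) \<noteq> Suc (card A)"
    then have "card (insert Z A) = card A" using assms(1) by (simp add: card_insert_if split: if_splits)
    then show False using assms(2,3) c2 by simp
  qed
  then show "Z \<notin> A" using assms(1) by (simp add: card_insert_if split: if_splits)
  show "card A = n" using assms c1 c2 by simp
qed

lemma Xim:
  fixes n :: nat
  assumes "3 \<le> n"
  shows "(\<lambda>j. if j = 1 then a else if j = 2 then b else if j = 3 then c else f (j - 4)) ` {1..n}
    = insert a (insert b (insert c (f ` {0..<n-3})))"
    (is "?F ` _ = _")
proof
  show "?F ` {1..n} \<subseteq> insert a (insert b (insert c (f ` {0..<n-3})))"
  proof
    fix x assume "x \<in> ?F ` {1..n}"
    then obtain j where j: "j \<in> {1..n}" "x = ?F j" by blast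
    show "x \<in> insert a (insert b (insert c (f ` {0..<n-3})))"
    proof (cases "j \<le> 3")
      case True
      then have "j = 1 \<or> j = 2 \<or> j = 3" using j(1) by auto
      then show ?thesis using j(2) by auto
    next
      case False
      then have "x = f (j - 4)" "j - 4 \<in> {0..<n-3}" using j by auto
      then show ?thesis by blast
    qed
  qed
  show "insert a (insert b (insert c (f ` {0..<n-3}))) \<subseteq> ?F ` {1..n}"
  proof -
    have "a = ?F 1" "b = ?F 2" "c = ?F 3" by simp_all
    moreover have "1 \<in> {1..n}" "2 \<in> {1..n}" "3 \<in> {1..n}" using assms by auto
    moreover have "f k \<in> ?F ` {1..n}" if "k < n - 3" for k
    proof -
      have "f k = ?F (k + 4)" by simp
      moreover have "k + 4 \<in> {1..n}" using that by auto
      ultimately show ?thesis by blast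
    qed
    ultimately show ?thesis by (auto simp: image_iff) (metis image_eqI)+
  qed
qed




lemma independent_indep2: assumes "independent {p, q}" "p \<noteq> q" shows "indep2 p q"
  unfolding indep2_def
proof (intro allI impI)
  fix s t assume st: "s *\<^sub>R p + t *\<^sub>R q = 0"
  have pn: "p \<notin> span {q}" and iq: "independent {q}"
    using assms independent_insert[of p "{q}"] by auto
  have "q \<noteq> 0" using iq independent_insert[of q "{}"] by auto
  have s0: "s = 0"
  proof (rule ccontr)
    assume "s \<noteq> 0"
    have "s *\<^sub>R p = - t *\<^sub>R q" using st by (simp add: eq_neg_iff_add_eq_0)
    then have "p = (- t / s) *\<^sub>R q" using \<open>s \<noteq> 0\<close>
      by (metis (no_types, lifting) divide_inverse_commute eq_vector_fraction_iff scaleR_scaleR)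
    then have "p \<in> span {q}" by (simp add: span_base span_scale span_neg)
    then show False using pn by simp
  qed
  then show "s = 0 \<and> t = 0" using st \<open>q \<noteq> 0\<close> by simp
qed

lemma indep2_D: "indep2 p q \<Longrightarrow> s *\<^sub>R p + t *\<^sub>R q = 0 \<Longrightarrow> s = 0 \<and> t = 0"
  unfolding indep2_def by blast

context lie
begin

lemma lcs1_eq: "lcs0 br 1 = span {br x y |x y. True}" by simp

lemma lcs_span:
  assumes dim2: "dim (lcs0 br 1) = 2" and i: "indep2 Y Z"
    and Yl: "Y \<in> lcs0 br 1" and Zl: "Z \<in> lcs0 br 1"
  shows "lcs0 br 1 = span {Y, Z}"
proof
  have ind: "independent {Y, Z}" by (rule indep2_independent[OF i])
  have "card {Y, Z} = 2" using indep2_props[OF i] by simp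
  then show "lcs0 br 1 \<subseteq> span {Y, Z}"
    using card_ge_dim_independent[of "{Y, Z}" "lcs0 br 1"] ind Yl Zl dim2 by simp
  show "span {Y, Z} \<subseteq> lcs0 br 1"
    by (rule span_minimal) (use Yl Zl lcs1_eq subspace_span in auto)
qed

lemma triple:
  assumes dim2: "dim (lcs0 br 1) = 2"
  shows "\<exists>X1 X2 X3 Y Z. indep2 Y Z \<and> br X1 X2 = Y \<and> br X1 X3 = Z \<and> br X2 X3 = 0"
proof -
  define G where "G = {br x y |x y. True}"
  obtain Bb where Bb: "Bb \<subseteq> G" "independent Bb" "G \<subseteq> span Bb" "card Bb = dim G"
    using basis_exists by blast
  have "dim G = 2" using dim2 lcs1_eq dim_span unfolding G_def by metis
  then obtain p q where pq: "Bb = {p, q}" "p \<noteq> q" using Bb(4) card_2_iff by metis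
  have ipq: "indep2 p q" using independent_indep2 Bb(2) pq by simp
  obtain a b where ab: "p = br a b" using Bb(1) pq unfolding G_def by auto
  obtain c d where cd: "q = br c d" using Bb(1) pq unfolding G_def by auto
  have i0: "indep2 (br a b) (br c d)" using ipq ab cd by simp
  have Y0: "br a b \<noteq> 0" and Z0: "br c d \<noteq> 0" using indep2_props[OF i0] by auto
  have "\<exists>X1 A C. indep2 (br X1 A) (br X1 C)"
  proof (cases "indep2 (br a b) (br a d)")
    case True then show ?thesis by blast
  next
    case n1: False
    show ?thesis
    proof (cases "indep2 (br d c) (br d a)")
      case True then show ?thesis by blast
    next
      case n2: False
      show ?thesis
      proof (cases "indep2 (br c d) (br c b)")
        case True then show ?thesis by blast
      next
        case n3: False
        show ?thesis
        proof (cases "indep2 (br b a) (br b c)")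
          case True then show ?thesis by blast
        next
          case n4: False
          obtain k1 where k1: "br a d = k1 *\<^sub>R br a b" using not_indep2[OF n1 Y0] by blast
          have dc: "br d c \<noteq> 0" using Z0 br_anti[of d c] by simp
          obtain k2 where k2: "br d a = k2 *\<^sub>R br d c" using not_indep2[OF n2 dc] by blast
          have "br a d = k2 *\<^sub>R br c d" using k2 br_anti[of d a] br_anti[of d c] by simp
          then have "k1 *\<^sub>R br a b + (- k2) *\<^sub>R br c d = 0" using k1 by simp
          then have "k1 = 0" using indep2_D[OF i0] by blast
          then have ad: "br a d = 0" using k1 by simp
          obtain k3 where k3: "br c b = k3 *\<^sub>R br c d" using not_indep2[OF n3 Z0] by blast
          have ba: "br b a \<noteq> 0" using Y0 br_anti[of b a] by simp
          obtain k4 where k4: "br b c = k4 *\<^sub>R br b a" using not_indep2[OF n4 ba] by blast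
          have "br c b = k4 *\<^sub>R br a b" using k4 br_anti[of b c] br_anti[of b a] by simp
          then have "k4 *\<^sub>R br a b + (- k3) *\<^sub>R br c d = 0" using k3 by simp
          then have "k4 = 0" using indep2_D[OF i0] by blast
          then have cb: "br c b = 0" using k4 br_anti[of b c] by simp
          have "br (a + c) b = br a b" "br (a + c) d = br c d" using ad cb by simp_all
          then have "indep2 (br (a + c) b) (br (a + c) d)" using i0 by simp
          then show ?thesis by blast
        qed
      qed
    qed
  qed
  then obtain X1 A C where i1: "indep2 (br X1 A) (br X1 C)" by blast
  define Y where "Y = br X1 A"
  define Z where "Z = br X1 C"
  have iYZ: "indep2 Y Z" using i1 unfolding Y_def Z_def .
  have ls: "lcs0 br 1 = span {Y, Z}"
    using lcs_span[OF dim2 iYZ] br_in_lcs1 unfolding Y_def Z_def by blast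
  have "br A C \<in> span {Y, Z}" using br_in_lcs1 ls by blast
  then obtain p q where pq: "br A C = p *\<^sub>R Y + q *\<^sub>R Z" using span2_iff by blast
  define X2 where "X2 = A - q *\<^sub>R X1"
  define X3 where "X3 = C + p *\<^sub>R X1"
  have "br X1 X2 = Y" unfolding X2_def Y_def by simp
  moreover have "br X1 X3 = Z" unfolding X3_def Z_def by simp
  moreover have "br X2 X3 = 0"
    unfolding X2_def X3_def using pq br_anti[of A X1] br_anti[of C X1]
    by (simp add: Y_def Z_def algebra_simps)
  ultimately show ?thesis using iYZ by blast
qed

end



lemma fin_basis:
  fixes X :: "nat \<Rightarrow> 'a::euclidean_space"
  assumes "independent S" "UNIV \<subseteq> span S" "card S = n + 2"
    "S = insert Y (insert Z (X ` {1..n}))"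
  shows "is_basis_XYZ n X Y Z"
proof -
  have f: "finite (X ` {1..n})" by simp
  have c: "card (X ` {1..n}) \<le> n" using card_image_le[of "{1..n}" X] by simp
  note ci = card_ins2[OF f c assms(3)[unfolded assms(4)]]
  have "inj_on X {1..n}" using ci(4) by (intro eq_card_imp_inj_on) simp_all
  moreover have "span S = UNIV" using assms(2) by auto
  ultimately show ?thesis unfolding is_basis_XYZ_def using ci assms(1,4) by simp
qed

context lie
begin

lemma basis_constr:
  assumes dim2: "dim (lcs0 br 1) = 2" and cent: "lcs0 br 1 \<subseteq> centre br"
    and iYZ: "indep2 Y Z" and h12: "br X1 X2 = Y" and h13: "br X1 X3 = Z" and h23: "br X2 X3 = 0"
    and DIM: "DIM('a) = n + 2"
  shows "3 \<le> n \<and> (\<exists>X. good_basis br n X Y Z)"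
proof -
  have ls: "lcs0 br 1 = span {Y, Z}" using lcs_span[OF dim2 iYZ] br_in_lcs1 h12 h13 by blast
  have rep: "\<exists>s t. P = s *\<^sub>R Y + t *\<^sub>R Z" if "P \<in> lcs0 br 1" for P using that ls span2_iff by blast
  have Yn: "Y \<noteq> 0" "Z \<noteq> 0" "Y \<noteq> Z" using indep2_props[OF iYZ] by auto
  have cz: "br x P = 0" if "P \<in> lcs0 br 1" for x P using cent that unfolding centre_def by blast
  have b21: "br X2 X1 = - Y" using br_anti[of X2 X1] h12 by simp
  define M0 where "M0 = {x. br X1 x = 0 \<and> br X2 x = 0}"
  define Q where "Q = {x. br X1 x = 0 \<and> (\<exists>s. br X2 x = s *\<^sub>R Z)}"
  have sM0: "subspace M0" unfolding subspace_def M0_def by simp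
  have sQ: "subspace Q" unfolding subspace_def
  proof (intro conjI ballI allI)
    show "0 \<in> Q" unfolding Q_def by (auto intro!: exI[of _ 0])
    fix x y assume x: "x \<in> Q" and y: "y \<in> Q"
    then obtain s1 s2 where "br X2 x = s1 *\<^sub>R Z" "br X2 y = s2 *\<^sub>R Z" "br X1 x = 0" "br X1 y = 0"
      unfolding Q_def by blast
    then show "x + y \<in> Q" unfolding Q_def by (auto intro!: exI[of _ "s1 + s2"] simp: scaleR_add_left)
  next
    fix c x assume x: "x \<in> Q"
    then obtain s1 where "br X2 x = s1 *\<^sub>R Z" "br X1 x = 0" unfolding Q_def by blast
    then show "c *\<^sub>R x \<in> Q" unfolding Q_def by (auto intro!: exI[of _ "c * s1"])
  qed
  have M0Q: "M0 \<subseteq> Q" unfolding M0_def Q_def by (auto intro!: exI[of _ 0])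
  have YZl: "Y \<in> lcs0 br 1" "Z \<in> lcs0 br 1" using h12 h13 br_in_lcs1 by auto
  have YZM0: "{Y, Z} \<subseteq> M0" unfolding M0_def using cz[OF YZl(1)] cz[OF YZl(2)] by auto
  obtain B0 where B0: "{Y, Z} \<subseteq> B0" "B0 \<subseteq> M0" "independent B0" "M0 \<subseteq> span B0"
    using maximal_independent_subset_extend[OF YZM0 indep2_independent[OF iYZ]] by blast
  have finB0: "finite B0" using B0(3) finiteI_independent by blast
  have spB0: "span B0 \<subseteq> M0" using span_minimal[OF B0(2) sM0] .
  define Bs where "Bs = B0 - {Y, Z}"
  have finBs: "finite Bs" unfolding Bs_def using finB0 by simp
  have B0eq: "B0 = insert Y (insert Z Bs)" unfolding Bs_def using B0(1) by auto
  have cB0: "card B0 = card Bs + 2" unfolding B0eq using finBs Yn(3) unfolding Bs_def by simp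
  have BsM0: "Bs \<subseteq> M0" using B0(2) unfolding Bs_def by auto
  have gen: "independent (insert X1 (insert X2 (insert X3 Ms))) \<and>
       UNIV \<subseteq> span (insert X1 (insert X2 (insert X3 Ms))) \<and>
       card (insert X1 (insert X2 (insert X3 Ms))) = card Ms + 3 \<and>
       card (insert X1 (insert X2 (insert X3 Ms))) = n + 2"
    if Ms: "Ms \<subseteq> Q" "independent Ms" "Q \<subseteq> span Ms" for Ms
  proof -
    have spMs: "span Ms \<subseteq> Q" using span_minimal[OF Ms(1) sQ] .
    have finMs: "finite Ms" using Ms(2) finiteI_independent by blast
    have n3: "X3 \<notin> span Ms"
    proof
      assume "X3 \<in> span Ms"
      then have "br X1 X3 = 0" using spMs unfolding Q_def by blast
      then show False using h13 Yn by simp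
    qed
    have n2: "X2 \<notin> span (insert X3 Ms)"
    proof
      assume "X2 \<in> span (insert X3 Ms)"
      then obtain k where "X2 - k *\<^sub>R X3 \<in> span Ms" unfolding span_insert[of X3] by blast
      then have "br X1 (X2 - k *\<^sub>R X3) = 0" using spMs unfolding Q_def by blast
      then have "1 *\<^sub>R Y + (- k) *\<^sub>R Z = 0" using h12 h13 by simp
      then show False using indep2_D[OF iYZ] by fastforce
    qed
    have n1: "X1 \<notin> span (insert X2 (insert X3 Ms))"
    proof
      assume "X1 \<in> span (insert X2 (insert X3 Ms))"
      then obtain k where "X1 - k *\<^sub>R X2 \<in> span (insert X3 Ms)" unfolding span_insert[of X2] by blast
      then obtain k' where k': "X1 - k *\<^sub>R X2 - k' *\<^sub>R X3 \<in> span Ms" unfolding span_insert[of X3] by blast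
      then have "br X1 (X1 - k *\<^sub>R X2 - k' *\<^sub>R X3) = 0" using spMs unfolding Q_def by blast
      then have "(- k) *\<^sub>R Y + (- k') *\<^sub>R Z = 0" using h12 h13 by simp
      then have "k = 0 \<and> k' = 0" using indep2_D[OF iYZ, of "-k" "-k'"] by simp
      then have "X1 \<in> Q" using k' spMs by auto
      then obtain s where "br X2 X1 = s *\<^sub>R Z" unfolding Q_def by blast
      then have "1 *\<^sub>R Y + s *\<^sub>R Z = 0" using b21 by (simp add: neg_eq_iff_add_eq_0)
      then show False using indep2_D[OF iYZ] by fastforce
    qed
    note i3 = ind_ins[OF Ms(2) n3]
    note i2 = ind_ins[OF i3(1) n2]
    note i1 = ind_ins[OF i2(1) n1]
    define S where "S = insert X1 (insert X2 (insert X3 Ms))"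
    have cS: "card S = card Ms + 3" unfolding S_def using finMs i1(2) i2(2) i3(2) by simp
    have spS: "UNIV \<subseteq> span S"
    proof
      fix x :: 'a
      obtain p q where pq: "br X1 x = p *\<^sub>R Y + q *\<^sub>R Z" using rep[OF br_in_lcs1] by blast
      define x1 where "x1 = x - p *\<^sub>R X2 - q *\<^sub>R X3"
      have bx1: "br X1 x1 = 0" unfolding x1_def using pq h12 h13 by simp
      obtain r s where rs: "br X2 x1 = r *\<^sub>R Y + s *\<^sub>R Z" using rep[OF br_in_lcs1] by blast
      define x2 where "x2 = x1 + r *\<^sub>R X1"
      have "br X1 x2 = 0" "br X2 x2 = s *\<^sub>R Z" unfolding x2_def using bx1 rs b21 by simp_all
      then have "x2 \<in> Q" unfolding Q_def by blast
      then have "x2 \<in> span S" using Ms(3) span_mono[of Ms S] unfolding S_def by blast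
      moreover have "X1 \<in> span S" "X2 \<in> span S" "X3 \<in> span S" unfolding S_def by (simp_all add: span_base)
      moreover have "x = x2 - r *\<^sub>R X1 + p *\<^sub>R X2 + q *\<^sub>R X3" unfolding x2_def x1_def by simp
      ultimately show "x \<in> span S" by (simp add: span_add span_diff span_scale)
    qed
    have "card S = dim (UNIV :: 'a set)" using basis_card_eq_dim[of S UNIV] spS i1(1) unfolding S_def by simp
    then show ?thesis using i1(1) spS cS DIM unfolding S_def by simp
  qed
  show ?thesis
  proof (cases "\<exists>w. br X1 w = 0 \<and> br X2 w = Z")
    case False
    have QM0: "Q \<subseteq> M0"
    proof
      fix x assume "x \<in> Q"
      then obtain s where s: "br X1 x = 0" "br X2 x = s *\<^sub>R Z" unfolding Q_def by blast
      have "s = 0"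
      proof (rule ccontr)
        assume "s \<noteq> 0"
        then have "br X1 ((1/s) *\<^sub>R x) = 0 \<and> br X2 ((1/s) *\<^sub>R x) = Z" using s by simp
        then show False using False by blast
      qed
      then show "x \<in> M0" using s unfolding M0_def by simp
    qed
    have g: "independent (insert X1 (insert X2 (insert X3 B0))) \<and>
       UNIV \<subseteq> span (insert X1 (insert X2 (insert X3 B0))) \<and>
       card (insert X1 (insert X2 (insert X3 B0))) = card B0 + 3 \<and>
       card (insert X1 (insert X2 (insert X3 B0))) = n + 2"
      using gen[of B0] B0 M0Q QM0 by blast
    have cBs: "card Bs = n - 3" and n3: "3 \<le> n" using g cB0 by auto
    obtain h where h: "bij_betw h {0..<card Bs} Bs" using ex_bij_betw_nat_finite[OF finBs] by blast
    have himg: "h ` {0..<n-3} = Bs" using bij_betw_imp_surj_on[OF h] cBs by simp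
    define X where "X = (\<lambda>j. if j = 1 then X1 else if j = 2 then X2 else if j = 3 then X3 else h (j - 4))"
    have Xi: "X ` {1..n} = insert X1 (insert X2 (insert X3 Bs))"
      unfolding X_def Xim[OF n3] himg ..
    have Seq: "insert X1 (insert X2 (insert X3 B0)) = insert Y (insert Z (X ` {1..n}))"
      unfolding Xi B0eq by auto
    have ib: "is_basis_XYZ n X Y Z" by (rule fin_basis) (use g Seq in auto)
    have hin: "h k \<in> Bs" if "k < n - 3" for k using himg that by auto
    have "good_basis br n X Y Z"
      unfolding good_basis_def
    proof (intro conjI impI allI)
      show "is_basis_XYZ n X Y Z" by (rule ib)
      show "br (X 1) (X 2) = Y" "br (X 1) (X 3) = Z" "br (X 2) (X 3) = 0"
        unfolding X_def using h12 h13 h23 by simp_all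
      assume n4: "4 \<le> n"
      have "X 4 \<in> M0" unfolding X_def using hin[of 0] n4 BsM0 by auto
      then have m: "br X1 (X 4) = 0" "br X2 (X 4) = 0" unfolding M0_def by auto
      then show "br (X 1) (X 4) = 0" by (simp add: X_def)
      show "\<exists>c::real. c \<in> {0, 1} \<and> br (X 2) (X 4) = c *\<^sub>R Z"
        using m by (intro exI[of _ 0]) (simp add: X_def)
    next
      fix j assume j: "5 \<le> j \<and> j \<le> n"
      have "X j \<in> M0" unfolding X_def using hin[of "j - 4"] j BsM0 by auto
      then show "br (X 1) (X j) = 0" "br (X 2) (X j) = 0" unfolding M0_def by (simp_all add: X_def)
    qed
    then show ?thesis using n3 by blast
  next
    case True
    then obtain w where w: "br X1 w = 0" "br X2 w = Z" by blast
    have wn: "w \<notin> span B0" using spB0 w Yn unfolding M0_def by auto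
    note iw = ind_ins[OF B0(3) wn]
    have "w \<in> Q" using w unfolding Q_def by (auto intro!: exI[of _ 1])
    then have MsQ: "insert w B0 \<subseteq> Q" using B0(2) M0Q by auto
    have QMs: "Q \<subseteq> span (insert w B0)"
    proof
      fix x assume "x \<in> Q"
      then obtain s where s: "br X1 x = 0" "br X2 x = s *\<^sub>R Z" unfolding Q_def by blast
      then have "x - s *\<^sub>R w \<in> M0" unfolding M0_def using w by simp
      then have "x - s *\<^sub>R w \<in> span B0" using B0(4) by blast
      then show "x \<in> span (insert w B0)" unfolding span_insert[of w] by blast
    qed
    have g: "independent (insert X1 (insert X2 (insert X3 (insert w B0)))) \<and>
       UNIV \<subseteq> span (insert X1 (insert X2 (insert X3 (insert w B0)))) \<and>
       card (insert X1 (insert X2 (insert X3 (insert w B0)))) = card (insert w B0) + 3 \<and>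
       card (insert X1 (insert X2 (insert X3 (insert w B0)))) = n + 2"
      using gen[OF MsQ iw(1) QMs] .
    have "card (insert w B0) = card B0 + 1" using iw(2) finB0 by simp
    then have cBs: "card Bs = n - 4" and n4: "4 \<le> n" using g cB0 by auto
    then have n3: "3 \<le> n" by simp
    obtain h where h: "bij_betw h {0..<card Bs} Bs" using ex_bij_betw_nat_finite[OF finBs] by blast
    have himg: "h ` {0..<card Bs} = Bs" using bij_betw_imp_surj_on[OF h] by simp
    define h' where "h' = (\<lambda>k. if k = 0 then w else h (k - 1))"
    have h'img: "h' ` {0..<n-3} = insert w Bs"
    proof
      show "h' ` {0..<n-3} \<subseteq> insert w Bs"
      proof
        fix y assume "y \<in> h' ` {0..<n-3}"
        then obtain k where k: "k < n - 3" "y = h' k" by auto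
        show "y \<in> insert w Bs"
        proof (cases "k = 0")
          case True then show ?thesis using k by (simp add: h'_def)
        next
          case False
          then have "k - 1 \<in> {0..<card Bs}" using k cBs by auto
          then show ?thesis using k False himg by (auto simp: h'_def)
        qed
      qed
      show "insert w Bs \<subseteq> h' ` {0..<n-3}"
      proof
        fix y assume "y \<in> insert w Bs"
        then show "y \<in> h' ` {0..<n-3}"
        proof
          assume "y = w"
          moreover have "h' 0 = w" "0 \<in> {0..<n-3}" using n4 by (auto simp: h'_def)
          ultimately show ?thesis by blast
        next
          assume "y \<in> Bs"
          then obtain i where i: "i < card Bs" "y = h i" using himg by (metis atLeastLessThan_iff imageE)
          then have "h' (i + 1) = y" "i + 1 \<in> {0..<n-3}" using cBs by (auto simp: h'_def)
          then show ?thesis by (metis rev_image_eqI)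
        qed
      qed
    qed
    define X where "X = (\<lambda>j. if j = 1 then X1 else if j = 2 then X2 else if j = 3 then X3 else h' (j - 4))"
    have Xi: "X ` {1..n} = insert X1 (insert X2 (insert X3 (insert w Bs)))"
      unfolding X_def Xim[OF n3] h'img ..
    have Seq: "insert X1 (insert X2 (insert X3 (insert w B0))) = insert Y (insert Z (X ` {1..n}))"
      unfolding Xi B0eq by auto
    have ib: "is_basis_XYZ n X Y Z" by (rule fin_basis) (use g Seq in auto)
    have hin: "h k \<in> Bs" if "k < n - 4" for k using himg that cBs by auto
    have "good_basis br n X Y Z"
      unfolding good_basis_def
    proof (intro conjI impI allI)
      show "is_basis_XYZ n X Y Z" by (rule ib)
      show "br (X 1) (X 2) = Y" "br (X 1) (X 3) = Z" "br (X 2) (X 3) = 0"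
        unfolding X_def using h12 h13 h23 by simp_all
      have X4: "X 4 = w" by (simp add: X_def h'_def)
      show "br (X 1) (X 4) = 0" using w X4 by (simp add: X_def)
      show "\<exists>c::real. c \<in> {0, 1} \<and> br (X 2) (X 4) = c *\<^sub>R Z"
        using w X4 by (intro exI[of _ 1]) (simp add: X_def)
    next
      fix j assume j: "5 \<le> j \<and> j \<le> n"
      have "X j = h (j - 5)" using j by (simp add: X_def h'_def)
      then have "X j \<in> M0" using hin[of "j - 5"] j BsM0 by auto
      then show "br (X 1) (X j) = 0" "br (X 2) (X j) = 0" unfolding M0_def by (simp_all add: X_def)
    qed
    then show ?thesis using n3 by blast
  qed
qed

end



locale qset = lie br for br :: "'a::euclidean_space \<Rightarrow> 'a \<Rightarrow> 'a" +
  fixes V :: "'v::euclidean_space set" and \<rho> :: "'a \<Rightarrow> 'v \<Rightarrow> 'v"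
    and B :: "'v \<Rightarrow> 'v \<Rightarrow> real" and \<alpha> :: "'a \<Rightarrow> 'a \<Rightarrow> 'v"
    and \<gamma> :: "'a \<Rightarrow> 'a \<Rightarrow> 'a \<Rightarrow> real"
  assumes c2: "cochain2 V \<alpha>" and c3: "cochain3 \<gamma>"
    and Blin1: "\<And>w. linear (\<lambda>v. B v w)" and Blin2: "\<And>v. linear (B v)"
    and inv: "\<And>x y. \<alpha> x y \<in> invariants \<rho> V"
    and d2z: "\<And>x y z. d2 br \<rho> \<alpha> x y z = 0"
    and d3e: "\<And>x1 x2 x3 x4. d3 br \<gamma> x1 x2 x3 x4 = half_wedge_sq B \<alpha> x1 x2 x3 x4"
    and subV: "subspace V"
begin
lemma aR: "linear (\<alpha> x)" using c2 unfolding cochain2_def by blast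
lemma aL: "linear (\<lambda>x. \<alpha> x y)" using c2 unfolding cochain2_def by blast
lemma a_addR[simp]: "\<alpha> x (a + b) = \<alpha> x a + \<alpha> x b" using linear_add[OF aR] .
lemma a_addL[simp]: "\<alpha> (a + b) y = \<alpha> a y + \<alpha> b y" using linear_add[OF aL[of y]] by simp
lemma a_scaleR[simp]: "\<alpha> x (c *\<^sub>R a) = c *\<^sub>R \<alpha> x a" using linear_scale[OF aR] .
lemma a_scaleL[simp]: "\<alpha> (c *\<^sub>R a) y = c *\<^sub>R \<alpha> a y" using linear_scale[OF aL[of y]] by simp
lemma a_0R[simp]: "\<alpha> x 0 = 0" using linear_0[OF aR] .
lemma a_0L[simp]: "\<alpha> 0 y = 0" using linear_0[OF aL[of y]] by simp
lemma a_negL[simp]: "\<alpha> (- a) y = - \<alpha> a y" using linear_neg[OF aL[of y]] by simp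
lemma a_self[simp]: "\<alpha> x x = 0" using c2 unfolding cochain2_def by blast
lemma a_anti: "\<alpha> y x = - \<alpha> x y"
proof -
  have "\<alpha> (x + y) (x + y) = \<alpha> x y + \<alpha> y x"
    by (simp only: a_addL a_addR a_self[of x] a_self[of y] add_0_left add_0_right add.commute)
  then have "\<alpha> x y + \<alpha> y x = 0" by simp
  then show ?thesis by (simp add: eq_neg_iff_add_eq_0 add.commute)
qed
lemma aV: "\<alpha> x y \<in> V" using c2 unfolding cochain2_def by blast
lemma rho0[simp]: "\<rho> z (\<alpha> x y) = 0" using inv[of x y] unfolding invariants_def by blast

lemma g1: "linear (\<lambda>x. \<gamma> x y z)" using c3 unfolding cochain3_def by blast
lemma g2: "linear (\<lambda>y. \<gamma> x y z)" using c3 unfolding cochain3_def by blast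
lemma g3: "linear (\<gamma> x y)" using c3 unfolding cochain3_def by blast
lemma g_add1[simp]: "\<gamma> (a + b) y z = \<gamma> a y z + \<gamma> b y z" using linear_add[OF g1[of y z]] by simp
lemma g_add2[simp]: "\<gamma> x (a + b) z = \<gamma> x a z + \<gamma> x b z" using linear_add[OF g2[of x z]] by simp
lemma g_add3[simp]: "\<gamma> x y (a + b) = \<gamma> x y a + \<gamma> x y b" using linear_add[OF g3] .
lemma g_scale1[simp]: "\<gamma> (c *\<^sub>R a) y z = c * \<gamma> a y z" using linear_scale[OF g1[of y z]] by simp
lemma g_scale2[simp]: "\<gamma> x (c *\<^sub>R a) z = c * \<gamma> x a z" using linear_scale[OF g2[of x z]] by simp
lemma g_scale3[simp]: "\<gamma> x y (c *\<^sub>R a) = c * \<gamma> x y a" using linear_scale[OF g3] by simp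
lemma g_01[simp]: "\<gamma> 0 y z = 0" using linear_0[OF g1[of y z]] by simp
lemma g_02[simp]: "\<gamma> x 0 z = 0" using linear_0[OF g2[of x z]] by simp
lemma g_03[simp]: "\<gamma> x y 0 = 0" using linear_0[OF g3] by simp
lemma g_neg1[simp]: "\<gamma> (- a) y z = - \<gamma> a y z" using linear_neg[OF g1[of y z]] by simp
lemma g_s12[simp]: "\<gamma> x x z = 0" using c3 unfolding cochain3_def by blast
lemma g_s23[simp]: "\<gamma> x y y = 0" using c3 unfolding cochain3_def by blast
lemma g_s13[simp]: "\<gamma> x y x = 0" using c3 unfolding cochain3_def by blast
lemma g_anti12: "\<gamma> y x z = - \<gamma> x y z"
proof -
  have "\<gamma> (x + y) (x + y) z = \<gamma> x y z + \<gamma> y x z"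
    by (simp only: g_add1 g_add2 g_s12[of x] g_s12[of y] add_0_left add_0_right add.commute)
  then show ?thesis by simp
qed
lemma g_anti23: "\<gamma> x z y = - \<gamma> x y z"
proof -
  have "\<gamma> x (y + z) (y + z) = \<gamma> x y z + \<gamma> x z y"
    by (simp only: g_add3 g_add2 g_s23[of x y] g_s23[of x z] add_0_left add_0_right add.commute)
  then show ?thesis by simp
qed

lemma B1[simp]: "B 0 w = 0" using linear_0[OF Blin1[of w]] by simp
lemma B2[simp]: "B v 0 = 0" using linear_0[OF Blin2] .
lemma Bneg1: "B (- v) w = - B v w" using linear_neg[OF Blin1[of w]] by simp

lemma d2_expand: "\<alpha> (br x y) z = \<alpha> (br x z) y - \<alpha> (br y z) x"
proof -
  have "d2 br \<rho> \<alpha> x y z = 0" by (rule d2z)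
  then have "- \<alpha> (br x y) z + \<alpha> (br x z) y - \<alpha> (br y z) x = 0"
    unfolding d2_def by simp
  then show ?thesis by (simp add: algebra_simps)
qed

lemma part3:
  assumes cent: "lcs0 br 1 \<subseteq> centre br"
    and lcs: "lcs0 br 1 = span {Y, Z}"
    and h12: "br X1 X2 = Y" and h13: "br X1 X3 = Z"
    and cu: "br X1 u = 0" "br X2 u = 0" "br X3 u = 0"
    and cv: "br X1 v = 0" "br X2 v = 0" "br X3 v = 0"
    and cA: "cond_A br V \<rho> B \<alpha> \<gamma> 1"
  shows "br u v = 0"
proof (rule ccontr)
  define W where "W = br u v"
  assume Wne: "br u v \<noteq> 0"
  have cz: "br x P = 0" if "P \<in> lcs0 br 1" for x P
    using cent that unfolding centre_def by blast
  have cz2: "br P x = 0" if "P \<in> lcs0 br 1" for x P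
    using cz[OF that, of x] br_anti[of P x] by simp
  have rep: "\<exists>s t. P = s *\<^sub>R Y + t *\<^sub>R Z" if "P \<in> lcs0 br 1" for P
    using that lcs span2_iff by blast
  have aP: "\<alpha> P w = 0" if P: "P \<in> lcs0 br 1" and w: "br X1 w = 0" "br X2 w = 0" "br X3 w = 0"
    for P w
  proof -
    have "\<alpha> (br X1 X2) w = \<alpha> (br X1 w) X2 - \<alpha> (br X2 w) X1" by (rule d2_expand)
    then have aY: "\<alpha> Y w = 0" using w h12 by simp
    have "\<alpha> (br X1 X3) w = \<alpha> (br X1 w) X3 - \<alpha> (br X3 w) X1" by (rule d2_expand)
    then have aZ: "\<alpha> Z w = 0" using w h13 by simp
    from rep[OF P] obtain s t where "P = s *\<^sub>R Y + t *\<^sub>R Z" by blast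
    then show ?thesis using aY aZ by simp
  qed
  have aW: "\<alpha> W t = 0" for t
  proof -
    have "\<alpha> (br u v) t = \<alpha> (br u t) v - \<alpha> (br v t) u" by (rule d2_expand)
    also have "\<alpha> (br u t) v = 0" by (rule aP[OF br_in_lcs1 cv])
    also have "\<alpha> (br v t) u = 0" by (rule aP[OF br_in_lcs1 cu])
    finally show ?thesis unfolding W_def by simp
  qed
  have Wl: "W \<in> lcs0 br 1" unfolding W_def by (rule br_in_lcs1)
  have gW: "\<gamma> Y W w = 0 \<and> \<gamma> Z W w = 0"
    if w: "br X1 w = 0" "br X2 w = 0" "br X3 w = 0" for w
  proof -
    have w': "br w X1 = 0" "br w X2 = 0" "br w X3 = 0"
      using w br_anti[of w X1] br_anti[of w X2] br_anti[of w X3] by simp_all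
    have "d3 br \<gamma> W w X1 X2 = half_wedge_sq B \<alpha> W w X1 X2" by (rule d3e)
    then have 1: "\<gamma> Y W w = 0"
      unfolding d3_def half_wedge_sq_def using cz2[OF Wl] w' h12 aW by simp
    have "d3 br \<gamma> W w X1 X3 = half_wedge_sq B \<alpha> W w X1 X3" by (rule d3e)
    then have 2: "\<gamma> Z W w = 0"
      unfolding d3_def half_wedge_sq_def using cz2[OF Wl] w' h13 aW by simp
    show ?thesis using 1 2 by simp
  qed
  from rep[OF Wl] obtain a b where Wab: "W = a *\<^sub>R Y + b *\<^sub>R Z" by blast
  have gYZ: "\<gamma> Y Z w = 0" if w: "br X1 w = 0" "br X2 w = 0" "br X3 w = 0" for w
  proof (rule ccontr)
    assume ne: "\<gamma> Y Z w \<noteq> 0"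
    have e1: "\<gamma> Y W w = b * \<gamma> Y Z w" unfolding Wab by simp
    have e2: "\<gamma> Z W w = - (a * \<gamma> Y Z w)" unfolding Wab using g_anti12[of Z Y w] by simp
    from gW[OF w] e1 e2 ne have "a = 0" "b = 0" by auto
    then have "W = 0" using Wab by simp
    then show False using Wne unfolding W_def by simp
  qed
  have gP: "\<gamma> P w Q = 0" if P: "P \<in> lcs0 br 1" and Q: "Q \<in> lcs0 br 1"
    and w: "br X1 w = 0" "br X2 w = 0" "br X3 w = 0" for P Q w
  proof -
    from rep[OF P] obtain s t where Ps: "P = s *\<^sub>R Y + t *\<^sub>R Z" by blast
    from rep[OF Q] obtain s' t' where Qs: "Q = s' *\<^sub>R Y + t' *\<^sub>R Z" by blast
    have z: "\<gamma> Y Z w = 0" by (rule gYZ[OF w])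
    have "\<gamma> Y w Z = 0" using g_anti23[of Y Z w] z by simp
    moreover have "\<gamma> Z w Y = 0" using g_anti23[of Z Y w] g_anti12[of Z Y w] z by simp
    ultimately show ?thesis unfolding Ps Qs by simp
  qed
  have key: "\<gamma> L W X = - B (- \<alpha> u v) (\<alpha> L X) + 0" if X: "X \<in> lcs0 br 1" for L X
  proof -
    have "d3 br \<gamma> u v L X = half_wedge_sq B \<alpha> u v L X" by (rule d3e)
    moreover have "\<gamma> (br u L) v X = 0" by (rule gP[OF br_in_lcs1 X cv])
    moreover have "\<gamma> (br v L) u X = 0" by (rule gP[OF br_in_lcs1 X cu])
    moreover have "\<alpha> v X = 0" using aP[OF X cv] a_anti[of v X] by simp
    moreover have "\<alpha> u X = 0" using aP[OF X cu] a_anti[of u X] by simp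
    ultimately have "- \<gamma> W L X = B (\<alpha> u v) (\<alpha> L X)"
      unfolding d3_def half_wedge_sq_def W_def using cz[OF X] by simp
    then show ?thesis using g_anti12[of L W X] Bneg1 by simp
  qed
  have "W \<in> lsub br V \<rho> 1" unfolding lsub_def using Wl cent by auto
  moreover have "- \<alpha> u v \<in> V" using aV subV by (simp add: subspace_neg)
  moreover have "\<alpha> L W = 0" for L using aW[of L] a_anti[of W L] by simp
  moreover have "linear (\<lambda>x::'a. 0::real)" by (rule linear_zero)
  ultimately have "W = 0" using cA key unfolding cond_A_def
    by (metis (no_types, lifting) cz)
  then show False using Wne unfolding W_def by simp
qed
end


theorem lemma6:
  fixes br :: "'a::euclidean_space \<Rightarrow> 'a \<Rightarrow> 'a" and n :: nat
    and V :: "'v::euclidean_space set" and \<rho> :: "'a \<Rightarrow> 'v \<Rightarrow> 'v"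
    and B :: "'v \<Rightarrow> 'v \<Rightarrow> real" and \<alpha> :: "'a \<Rightarrow> 'a \<Rightarrow> 'v"
    and \<gamma> :: "'a \<Rightarrow> 'a \<Rightarrow> 'a \<Rightarrow> real"
  assumes "lie_algebra br"
    and "nilpotent_lie br"
    and "admissible_data br V \<rho> B \<alpha> \<gamma>"
    and "dim (lcs0 br 1) = 2"
    and "lcs0 br 1 \<subseteq> centre br"
    and "DIM('a) = n + 2"
  shows "3 \<le> n \<and> (\<exists>X Y Z. good_basis br n X Y Z) \<and>
         (\<forall>X Y Z j0. good_basis br n X Y Z \<and>
            (\<forall>j. j0 \<le> j \<and> j \<le> n \<longrightarrow>
               br (X 1) (X j) = 0 \<and> br (X 2) (X j) = 0 \<and> br (X 3) (X j) = 0)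
            \<longrightarrow> (\<forall>r s. j0 \<le> r \<and> r \<le> n \<and> j0 \<le> s \<and> s \<le> n \<longrightarrow> br (X r) (X s) = 0))"
proof -
  interpret lie br using assms(1) by unfold_locales
  have ad: "semisimple_orthogonal_module br V \<rho> B" "quad_cocycle br V \<rho> B \<alpha> \<gamma>"
    "\<And>x y. \<alpha> x y \<in> invariants \<rho> V" "\<And>k. cond_A br V \<rho> B \<alpha> \<gamma> k"
    using assms(3) unfolding admissible_data_def by auto
  have q: "qset br V \<rho> B \<alpha> \<gamma>"
    unfolding qset_def qset_axioms_def lie_def
    using assms(1) ad(1,2,3) unfolding quad_cocycle_def semisimple_orthogonal_module_def by blast
  interpret qset br V \<rho> B \<alpha> \<gamma> by (rule q)
  obtain X1 X2 X3 Y Z where t: "indep2 Y Z" "br X1 X2 = Y" "br X1 X3 = Z" "br X2 X3 = 0"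
    using triple[OF assms(4)] by blast
  have P12: "3 \<le> n \<and> (\<exists>X. good_basis br n X Y Z)"
    by (rule basis_constr[OF assms(4) assms(5) t assms(6)])
  have P3: "\<forall>X Y Z j0. good_basis br n X Y Z \<and>
            (\<forall>j. j0 \<le> j \<and> j \<le> n \<longrightarrow>
               br (X 1) (X j) = 0 \<and> br (X 2) (X j) = 0 \<and> br (X 3) (X j) = 0)
            \<longrightarrow> (\<forall>r s. j0 \<le> r \<and> r \<le> n \<and> j0 \<le> s \<and> s \<le> n \<longrightarrow> br (X r) (X s) = 0)"
  proof (intro allI impI)
    fix X :: "nat \<Rightarrow> 'a" and Y Z :: 'a and j0 r s :: nat
    assume h: "good_basis br n X Y Z \<and>
            (\<forall>j. j0 \<le> j \<and> j \<le> n \<longrightarrow>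
               br (X 1) (X j) = 0 \<and> br (X 2) (X j) = 0 \<and> br (X 3) (X j) = 0)"
      and rs: "j0 \<le> r \<and> r \<le> n \<and> j0 \<le> s \<and> s \<le> n"
    have gb: "is_basis_XYZ n X Y Z" "br (X 1) (X 2) = Y" "br (X 1) (X 3) = Z"
      using h unfolding good_basis_def by auto
    have "independent {Y, Z}"
      using gb(1) unfolding is_basis_XYZ_def
      by (meson independent_mono insert_mono subset_insertI empty_subsetI)
    moreover have "Y \<noteq> Z" using gb(1) unfolding is_basis_XYZ_def by auto
    ultimately have iYZ: "indep2 Y Z" by (rule independent_indep2)
    have ls: "lcs0 br 1 = span {Y, Z}"
      using lcs_span[OF assms(4) iYZ] br_in_lcs1 gb(2,3) by blast
    have cu: "br (X 1) (X r) = 0" "br (X 2) (X r) = 0" "br (X 3) (X r) = 0"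
      using h rs by auto
    have cv: "br (X 1) (X s) = 0" "br (X 2) (X s) = 0" "br (X 3) (X s) = 0"
      using h rs by auto
    show "br (X r) (X s) = 0"
      by (rule part3[OF assms(5) ls gb(2) gb(3) cu cv ad(4)])
  qed
  show ?thesis using P12 P3 by blast
qed

end
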